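(* For the ring grooming instance with $n=15$, $c=1$ and uniform traffic $d_{jk}=1$ for all $j\ne k$, the minimum number of ADMs is $m=105$, attained by a routing using $35$ rings with exactly three ADMs each.
   Context: Ring grooming. An instance consists of integers $n\ge 2$ (ring size) and $c\ge 1$ (capacity), and a finite list $L$ of unordered pairs $\{j,k\}$ with $j\ne k$, $j,k\in\{1,\dots,n\}$ (repetitions allowed); these are the traffic demands. Let $d_{jk}=d_{kj}$ be the number of times $\{j,k\}$ occurs in $L$ (the traffic matrix; $d_{jj}=0$). Let $C_n$ be the cycle graph on vertices $1,\dots,n$ in cyclic order, with edges $\{l,l+1\}$ for $1\le l<n$ and $\{n,1\}$. A solution uses some finite number $r$ of "rings", each a copy of $C_n$ in which every edge has capacity $c$. A routing specifies, for every ring $i$ and every pair $j<k$, nonnegative integers $t^0_{ijk},t^1_{ijk}$: the amounts of $\{j,k\}$-traffic sent on ring $i$ along each of the two arcs of $C_n$ between $j$ and $k$. It is feasible if $\sum_i (t^0_{ijk}+t^1_{ijk})=d_{jk}$ for all $j<k$, and for every ring $i$ and every edge $e$ of $C_n$ the total traffic routed on ring $i$ along arcs containing $e$ is at most $c$. Ring $i$ needs an ADM (add/drop multiplexer) at vertex $j$ iff some traffic with endpoint $j$ is routed on ring $i$. The cost of a routing is the total number of ADMs, i.e. the number of pairs (ring $i$, vertex $j$) at which an ADM is needed. $m=m(n,c,L)$ denotes the minimum cost over all feasible routings. *)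

theory Defs
  imports Main
begin

text \<open>Vertices of the cycle C_n are 1..n; edge l (1 \<le> l \<le> n) is
  {l, l+1} for l < n and {n, 1} for l = n.
  A routing with r rings is a function t with t b i j k the amount of {j,k}-traffic
  (j < k) routed on ring i (i < r) along arc b (b \<in> {0,1}).  Values of t outside
  these index ranges are irrelevant.\<close>

definition on_arc :: "nat \<Rightarrow> nat \<Rightarrow> nat \<Rightarrow> nat \<Rightarrow> bool" where
  "on_arc b j k l = (if b = 0 then j \<le> l \<and> l < k else \<not> (j \<le> l \<and> l < k))"

definition pairs :: "nat \<Rightarrow> (nat \<times> nat) set" where
  "pairs n = {(j, k). 1 \<le> j \<and> j < k \<and> k \<le> n}"

definition feasible ::
  "nat \<Rightarrow> nat \<Rightarrow> (nat \<Rightarrow> nat \<Rightarrow> nat) \<Rightarrow> nat \<Rightarrow> (nat \<Rightarrow> nat \<Rightarrow> nat \<Rightarrow> nat \<Rightarrow> nat) \<Rightarrow> bool" where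
  "feasible n c d r t \<longleftrightarrow>
     (\<forall>(j, k) \<in> pairs n. (\<Sum>i<r. t 0 i j k + t 1 i j k) = d j k) \<and>
     (\<forall>i<r. \<forall>l\<in>{1..n}.
        (\<Sum>(j, k) \<in> pairs n. \<Sum>b\<in>{0::nat, 1}. if on_arc b j k l then t b i j k else 0) \<le> c)"

definition adms :: "nat \<Rightarrow> (nat \<Rightarrow> nat \<Rightarrow> nat \<Rightarrow> nat \<Rightarrow> nat) \<Rightarrow> nat \<Rightarrow> nat set" where
  "adms n t i = {v \<in> {1..n}. \<exists>(j, k) \<in> pairs n. (v = j \<or> v = k) \<and> t 0 i j k + t 1 i j k > 0}"

definition cost :: "nat \<Rightarrow> nat \<Rightarrow> (nat \<Rightarrow> nat \<Rightarrow> nat \<Rightarrow> nat \<Rightarrow> nat) \<Rightarrow> nat" where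
  "cost n r t = (\<Sum>i<r. card (adms n t i))"

definition min_ADM :: "nat \<Rightarrow> nat \<Rightarrow> (nat \<Rightarrow> nat \<Rightarrow> nat) \<Rightarrow> nat" where
  "min_ADM n c d = (LEAST m. \<exists>r t. feasible n c d r t \<and> cost n r t = m)"

definition uniform_traffic :: "nat \<Rightarrow> nat \<Rightarrow> nat" where
  "uniform_traffic j k = (if j \<noteq> k then 1 else 0)"

end

theory Submission
  imports Defs
begin

definition inc :: "nat \<Rightarrow> nat \<Rightarrow> (nat \<times> nat) set" where
  "inc n v = {p \<in> pairs n. fst p = v \<or> snd p = v}"

lemma finite_pairs: "finite (pairs n)"
proof -
  have "pairs n \<subseteq> {1..n} \<times> {1..n}" by (auto simp: pairs_def)
  then show ?thesis by (rule finite_subset) auto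
qed

lemma inc_sub: "inc n v \<subseteq> pairs n" by (auto simp: inc_def)

lemma finite_inc: "finite (inc n v)"
  by (rule finite_subset[OF inc_sub finite_pairs])

lemma pair_edge:
  fixes t :: "nat \<Rightarrow> nat \<Rightarrow> nat \<Rightarrow> nat \<Rightarrow> nat"
  assumes "(j, k) \<in> pairs n" "j = v \<or> k = v"
  shows "t 0 i j k + t 1 i j k \<le>
     (\<Sum>b\<in>{0::nat, 1}. if on_arc b j k (if v = 1 then n else v - 1) then t b i j k else 0)
   + (\<Sum>b\<in>{0::nat, 1}. if on_arc b j k v then t b i j k else 0)"
  using assms unfolding pairs_def on_arc_def by (cases "v = 1") auto

lemma vertex_load:
  assumes f: "feasible n c d r t" and i: "i < r" and v: "v \<in> {1..n}"
  shows "(\<Sum>p\<in>inc n v. t 0 i (fst p) (snd p) + t 1 i (fst p) (snd p)) \<le> 2 * c"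
proof -
  define F where "F l p = (\<Sum>b\<in>{0::nat, 1}. if on_arc b (fst p) (snd p) l then t b i (fst p) (snd p) else 0)" for l p
  define L where "L = (if v = 1 then n else v - 1)"
  have Lr: "L \<in> {1..n}" using v by (auto simp: L_def)
  have loadL: "(\<Sum>p\<in>pairs n. F L p) \<le> c"
    using f i Lr unfolding feasible_def F_def by (auto simp: case_prod_beta)
  have loadR: "(\<Sum>p\<in>pairs n. F v p) \<le> c"
    using f i v unfolding feasible_def F_def by (auto simp: case_prod_beta)
  have "(\<Sum>p\<in>inc n v. t 0 i (fst p) (snd p) + t 1 i (fst p) (snd p)) \<le> (\<Sum>p\<in>inc n v. F L p + F v p)"
  proof (rule sum_mono)
    fix p assume "p \<in> inc n v"
    then show "t 0 i (fst p) (snd p) + t 1 i (fst p) (snd p) \<le> F L p + F v p"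
      unfolding F_def L_def inc_def using pair_edge[of "fst p" "snd p" n v t i] by auto
  qed
  also have "\<dots> \<le> (\<Sum>p\<in>pairs n. F L p + F v p)"
    by (rule sum_mono2[OF finite_pairs inc_sub]) auto
  also have "\<dots> = (\<Sum>p\<in>pairs n. F L p) + (\<Sum>p\<in>pairs n. F v p)" by (rule sum.distrib)
  also have "\<dots> \<le> 2 * c" using loadL loadR by simp
  finally show ?thesis .
qed

lemma not_adm_zero:
  assumes "v \<notin> adms n t i" "v \<in> {1..n}" "p \<in> inc n v"
  shows "t 0 i (fst p) (snd p) + t 1 i (fst p) (snd p) = 0"
  using assms unfolding adms_def inc_def by (cases p) auto

lemma vertex_count:
  assumes f: "feasible n c d r t" and v: "v \<in> {1..n}"
  shows "(\<Sum>p\<in>inc n v. d (fst p) (snd p)) \<le> 2 * c * card {i \<in> {..<r}. v \<in> adms n t i}"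
proof -
  have "(\<Sum>p\<in>inc n v. d (fst p) (snd p)) =
     (\<Sum>p\<in>inc n v. \<Sum>i<r. t 0 i (fst p) (snd p) + t 1 i (fst p) (snd p))"
  proof (intro sum.cong refl)
    fix p assume "p \<in> inc n v"
    then have "p \<in> pairs n" using inc_sub by blast
    then show "d (fst p) (snd p) = (\<Sum>i<r. t 0 i (fst p) (snd p) + t 1 i (fst p) (snd p))"
      using f unfolding feasible_def by (auto simp: case_prod_beta)
  qed
  also have "\<dots> = (\<Sum>i<r. \<Sum>p\<in>inc n v. t 0 i (fst p) (snd p) + t 1 i (fst p) (snd p))"
    by (rule sum.swap)
  also have "\<dots> \<le> (\<Sum>i<r. if v \<in> adms n t i then 2 * c else 0)"
  proof (rule sum_mono)
    fix i assume i: "i \<in> {..<r}"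
    show "(\<Sum>p\<in>inc n v. t 0 i (fst p) (snd p) + t 1 i (fst p) (snd p)) \<le> (if v \<in> adms n t i then 2 * c else 0)"
    proof (cases "v \<in> adms n t i")
      case True then show ?thesis using vertex_load[OF f _ v, of i] i by simp
    next
      case False
      have "(\<Sum>p\<in>inc n v. t 0 i (fst p) (snd p) + t 1 i (fst p) (snd p)) = 0"
        by (rule sum.neutral) (use not_adm_zero[OF False v] in blast)
      then show ?thesis using False by simp
    qed
  qed
  also have "\<dots> = (\<Sum>i\<in>{i \<in> {..<r}. v \<in> adms n t i}. 2 * c)"
    by (rule sum.inter_filter[symmetric]) simp
  also have "\<dots> = 2 * c * card {i \<in> {..<r}. v \<in> adms n t i}" by simp
  finally show ?thesis .
qed

lemma adms_sub: "adms n t i \<subseteq> {1..n}" by (auto simp: adms_def)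

lemma cost_swap: "cost n r t = (\<Sum>v\<in>{1..n}. card {i \<in> {..<r}. v \<in> adms n t i})"
proof -
  have "cost n r t = (\<Sum>i<r. \<Sum>v\<in>{1..n}. if v \<in> adms n t i then 1 else 0)"
    unfolding cost_def
  proof (intro sum.cong refl)
    fix i
    have "card (adms n t i) = (\<Sum>v\<in>adms n t i. 1::nat)" by simp
    also have "\<dots> = (\<Sum>v\<in>{v\<in>{1..n}. v \<in> adms n t i}. 1::nat)"
      by (rule sum.cong) (use adms_sub[of n t i] in auto)
    also have "(\<Sum>v\<in>{v\<in>{1..n}. v \<in> adms n t i}. 1::nat) = (\<Sum>v\<in>{1..n}. if v \<in> adms n t i then 1 else 0)"
      by (rule sum.inter_filter) simp
    finally show "card (adms n t i) = (\<Sum>v\<in>{1..n}. if v \<in> adms n t i then 1 else 0)" .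
  qed
  also have "\<dots> = (\<Sum>v\<in>{1..n}. \<Sum>i<r. if v \<in> adms n t i then 1 else 0)" by (rule sum.swap)
  also have "\<dots> = (\<Sum>v\<in>{1..n}. card {i \<in> {..<r}. v \<in> adms n t i})"
    by (intro sum.cong refl) (simp add: sum.inter_filter[symmetric])
  finally show ?thesis .
qed

lemma card_inc:
  assumes v: "v \<in> {1..n}"
  shows "card (inc n v) = n - 1"
proof -
  have eq: "inc n v = (\<lambda>w. (min v w, max v w)) ` ({1..n} - {v})"
  proof
    show "inc n v \<subseteq> (\<lambda>w. (min v w, max v w)) ` ({1..n} - {v})"
    proof
      fix p assume p: "p \<in> inc n v"
      obtain j k where pk: "p = (j, k)" by (cases p)
      show "p \<in> (\<lambda>w. (min v w, max v w)) ` ({1..n} - {v})"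
      proof (cases "j = v")
        case True
        then show ?thesis using p pk by (auto simp: inc_def pairs_def intro!: image_eqI[where x = k])
      next
        case False
        then show ?thesis using p pk by (auto simp: inc_def pairs_def intro!: image_eqI[where x = j])
      qed
    qed
  next
    show "(\<lambda>w. (min v w, max v w)) ` ({1..n} - {v}) \<subseteq> inc n v"
    proof
      fix p assume "p \<in> (\<lambda>w. (min v w, max v w)) ` ({1..n} - {v})"
      then obtain x where x: "x \<in> {1..n} - {v}" "p = (min v x, max v x)" by blast
      show "p \<in> inc n v" using v x by (cases "v \<le> x") (auto simp: inc_def pairs_def min_def max_def)
    qed
  qed
  have "inj_on (\<lambda>w. (min v w, max v w)) ({1..n} - {v})"
  proof (rule inj_onI)
    fix x y assume x: "x \<in> {1..n} - {v}" and y: "y \<in> {1..n} - {v}"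
      and e: "(min v x, max v x) = (min v y, max v y)"
    then show "x = y" by (cases "v \<le> x"; cases "v \<le> y"; simp add: min_def max_def)
  qed
  then have "card (inc n v) = card ({1..n} - {v})" unfolding eq by (rule card_image)
  also have "\<dots> = n - 1" using v by simp
  finally show ?thesis .
qed

lemma lower_bound:
  assumes f: "feasible 15 1 uniform_traffic r t"
  shows "105 \<le> cost 15 r t"
proof -
  have "\<And>v. v \<in> {1..15} \<Longrightarrow> 7 \<le> card {i \<in> {..<r}. v \<in> adms 15 t i}"
  proof -
    fix v :: nat assume v: "v \<in> {1..15}"
    have "(\<Sum>p\<in>inc 15 v. uniform_traffic (fst p) (snd p)) = (\<Sum>p\<in>inc 15 v. 1)"
      by (intro sum.cong refl) (auto simp: inc_def pairs_def uniform_traffic_def)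
    also have "\<dots> = 14" using card_inc[OF v] by simp
    finally have "14 \<le> 2 * 1 * card {i \<in> {..<r}. v \<in> adms 15 t i}"
      using vertex_count[OF f v] by simp
    then show "7 \<le> card {i \<in> {..<r}. v \<in> adms 15 t i}" by simp
  qed
  then have "(\<Sum>v\<in>{1..15::nat}. 7) \<le> (\<Sum>v\<in>{1..15}. card {i \<in> {..<r}. v \<in> adms 15 t i})"
    by (intro sum_mono) auto
  then show ?thesis unfolding cost_swap by simp
qed

definition sts :: "(nat \<times> nat \<times> nat) list" where
  "sts = [(1,2,3), (1,4,5), (1,6,7), (1,8,9), (1,10,11), (1,12,13), (1,14,15), (2,4,6), (2,5,7), (2,8,10), (2,9,11), (2,12,14), (2,13,15), (3,4,7), (3,5,6), (3,8,11), (3,9,10), (3,12,15), (3,13,14), (4,8,12), (4,9,13), (4,10,14), (4,11,15), (5,8,13), (5,9,12), (5,10,15), (5,11,14), (6,8,14), (6,9,15), (6,10,12), (6,11,13), (7,8,15), (7,9,14), (7,10,13), (7,11,12)]"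

definition tt :: "nat \<times> nat \<times> nat \<Rightarrow> nat \<Rightarrow> nat \<Rightarrow> nat \<Rightarrow> nat" where
  "tt tr \<beta> j k = (case tr of (a, b, c) \<Rightarrow> if \<beta> = 0 then (if (j = a \<and> k = b) \<or> (j = b \<and> k = c) then 1 else 0)
      else (if j = a \<and> k = c then 1 else 0))"

definition tsol :: "nat \<Rightarrow> nat \<Rightarrow> nat \<Rightarrow> nat \<Rightarrow> nat" where
  "tsol \<beta> i j k = tt (sts ! i) \<beta> j k"

lemma sts_len: "length sts = 35" by (simp add: sts_def)

lemma sts_ok: "list_all (\<lambda>(a, b, c). 1 \<le> a \<and> a < b \<and> b < c \<and> c \<le> 15) sts"
  by (simp add: sts_def)

lemma sts_tri: "i < 35 \<Longrightarrow> \<exists>a b c. sts ! i = (a, b, c) \<and> 1 \<le> a \<and> a < b \<and> b < c \<and> c \<le> 15"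
proof -
  assume i: "i < 35"
  have P: "(\<lambda>(a, b, c). 1 \<le> a \<and> a < b \<and> b < c \<and> c \<le> (15::nat)) (sts ! i)"
    using sts_ok i sts_len unfolding list_all_length by simp
  obtain a b c where e: "sts ! i = (a, b, c)" by (cases "sts ! i") blast
  show ?thesis using P e by simp
qed

lemma sts_cover: "list_all (\<lambda>j. list_all (\<lambda>k. sum_list (map (\<lambda>tr. tt tr 0 j k + tt tr 1 j k) sts) = 1) [Suc j..<16]) [1..<16]"
  by (simp add: sts_def upt_rec tt_def)

lemma tri_load:
  assumes "1 \<le> a" "a < b" "b < c" "c \<le> n"
  shows "(\<Sum>(j, k) \<in> pairs n. \<Sum>\<beta>\<in>{0::nat, 1}. if on_arc \<beta> j k l then tt (a, b, c) \<beta> j k else 0) \<le> 1"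
proof -
  define h where "h = (\<lambda>(j, k). \<Sum>\<beta>\<in>{0::nat, 1}. if on_arc \<beta> j k l then tt (a, b, c) \<beta> j k else 0)"
  have S: "{(a, b), (b, c), (a, c)} \<subseteq> pairs n" using assms by (auto simp: pairs_def)
  have "sum h (pairs n) = sum h {(a, b), (b, c), (a, c)}"
    by (rule sum.mono_neutral_right[OF finite_pairs S]) (auto simp: h_def tt_def split: if_splits)
  also have "\<dots> \<le> 1" using assms by (auto simp: h_def on_arc_def tt_def)
  finally show ?thesis by (simp add: h_def)
qed

lemma tri_adms:
  assumes "sts ! i = (a, b, c)" "1 \<le> a" "a < b" "b < c" "c \<le> 15"
  shows "adms 15 tsol i = {a, b, c}"
  using assms unfolding adms_def pairs_def tsol_def tt_def by auto

lemma sum_sts: "(\<Sum>i<35. f (sts ! i)) = sum_list (map f sts)"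
proof -
  have "sum_list (map f sts) = (\<Sum>i = 0..<length (map f sts). map f sts ! i)" by (rule sum_list_sum_nth)
  also have "\<dots> = (\<Sum>i<35. f (sts ! i))" by (simp add: sts_len atLeast0LessThan)
  finally show ?thesis by simp
qed

lemma construction: "feasible 15 1 uniform_traffic 35 tsol \<and> (\<forall>i<35. card (adms 15 tsol i) = 3)"
proof (intro conjI allI impI)
  fix i :: nat assume i: "i < 35"
  obtain a b c where abc: "sts ! i = (a, b, c)" "1 \<le> a" "a < b" "b < c" "c \<le> 15" using sts_tri[OF i] by blast
  show "card (adms 15 tsol i) = 3" using tri_adms[OF abc] abc by simp
next
  have dem: "(\<Sum>i<35. tsol 0 i j k + tsol 1 i j k) = uniform_traffic j k" if "(j, k) \<in> pairs 15" for j k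
  proof -
    have "(\<Sum>i<35. tsol 0 i j k + tsol 1 i j k) = sum_list (map (\<lambda>tr. tt tr 0 j k + tt tr 1 j k) sts)"
      unfolding tsol_def by (rule sum_sts)
    also have "\<dots> = 1" using sts_cover that by (auto simp: list_all_iff pairs_def)
    finally show ?thesis using that by (simp add: uniform_traffic_def pairs_def)
  qed
  have load: "(\<Sum>(j, k) \<in> pairs 15. \<Sum>b\<in>{0::nat, 1}. if on_arc b j k l then tsol b i j k else 0) \<le> 1"
    if i: "i < 35" for i l
  proof -
    obtain a b c where abc: "sts ! i = (a, b, c)" "1 \<le> a" "a < b" "b < c" "c \<le> 15" using sts_tri[OF i] by blast
    show ?thesis unfolding tsol_def abc(1) using tri_load[OF abc(2-5)] by blast
  qed
  show "feasible 15 1 uniform_traffic 35 tsol" unfolding feasible_def using dem load by auto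
qed

theorem mainTheorem11:
  shows "min_ADM 15 1 uniform_traffic = 105 \<and>
    (\<exists>t. feasible 15 1 uniform_traffic 35 t \<and> cost 15 35 t = 105 \<and>
         (\<forall>i<35. card (adms 15 t i) = 3))"
proof -
  have c: "feasible 15 1 uniform_traffic 35 tsol" "\<forall>i<35. card (adms 15 tsol i) = 3"
    using construction by auto
  have cost: "cost 15 35 tsol = 105" using c(2) unfolding cost_def by simp
  have "min_ADM 15 1 uniform_traffic = 105"
    unfolding min_ADM_def
  proof (rule Least_equality)
    show "\<exists>r t. feasible 15 1 uniform_traffic r t \<and> cost 15 r t = 105" using c(1) cost by blast
  next
    fix m assume "\<exists>r t. feasible 15 1 uniform_traffic r t \<and> cost 15 r t = m"
    then show "105 \<le> m" using lower_bound by blast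
  qed
  then show ?thesis using c cost by blast
qed

end
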